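(* Let $n\geq2$ be an integer, and let $f:[0,\infty)\to[0,\infty)$ be a continuous, log-concave function, $C^2$-smooth on $(0,\infty)$, with $0<\int_0^\infty f<\infty$. Then for $0\leq\varepsilon\leq1$, $$ \int_{t_n(f)(1-\varepsilon)}^{t_n(f)(1+\varepsilon)}t^{n-1}f(t)\,dt\geq\left(1-Ce^{-c\varepsilon^2n}\right)\int_0^\infty t^{n-1}f(t)\,dt, $$ where $C>1$ and $0<c<1$ are universal constants.
   Context: For such $f$ and $p>1$, $t_p(f)$ denotes the unique $t>0$ with $f(t)>0$ and $f'(t)/f(t)=-(p-1)/t$ (existence and uniqueness hold under the stated assumptions). Log-concave: $f(\lambda x+(1-\lambda)y)\geq f(x)^\lambda f(y)^{1-\lambda}$. *)

theory Defs
  imports "HOL-Analysis.Analysis"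
begin

definition log_concave_on_nonneg :: "(real \<Rightarrow> real) \<Rightarrow> bool" where
  "log_concave_on_nonneg f \<longleftrightarrow>
     (\<forall>x\<ge>0. \<forall>y\<ge>0. \<forall>l\<in>{0..1::real}.
        f (l * x + (1 - l) * y) \<ge> (f x powr l) * (f y powr (1 - l)))"

definition C2_on_pos :: "(real \<Rightarrow> real) \<Rightarrow> bool" where
  "C2_on_pos f \<longleftrightarrow>
     (\<forall>t>0. f differentiable (at t) \<and> (deriv f) differentiable (at t)) \<and>
     continuous_on {0<..} (deriv (deriv f))"

definition tp :: "real \<Rightarrow> (real \<Rightarrow> real) \<Rightarrow> real" where
  "tp p f = (THE t. t > 0 \<and> f t > 0 \<and> deriv f t / f t = - (p - 1) / t)"

end

theory Submission
  imports Defs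
begin

lemma lc_pos_between:
  assumes lc: "log_concave_on_nonneg f" and "0 \<le> a" "a \<le> b" "b \<le> c" "f a > 0" "f c > 0"
  shows "f b > 0"
proof (cases "a = c")
  case True then show ?thesis using assms by auto
next
  case False
  define l where "l = (c - b) / (c - a)"
  have ca: "c - a > 0" using False assms by auto
  have l01: "l \<in> {0..1}" using assms ca by (auto simp: l_def field_simps)
  have "1 - l = (b - a) / (c - a)" using ca by (simp add: l_def field_simps)
  hence "l * a + (1 - l) * c = ((c - b) * a + (b - a) * c) / (c - a)"
    by (simp add: l_def add_divide_distrib)
  also have "(c - b) * a + (b - a) * c = b * (c - a)" by algebra
  finally have lb: "l * a + (1 - l) * c = b" using ca by simp
  have "f (l * a + (1 - l) * c) \<ge> f a powr l * f c powr (1 - l)"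
    using lc l01 assms unfolding log_concave_on_nonneg_def by auto
  moreover have "f a powr l * f c powr (1 - l) > 0" using assms by simp
  ultimately show ?thesis using lb by simp
qed

lemma lc_convex:
  assumes lc: "log_concave_on_nonneg f"
  shows "convex_on {t. 0 \<le> t \<and> 0 < f t} (\<lambda>t. - ln (f t))"
proof -
  let ?P = "{t. 0 \<le> t \<and> 0 < f t}"
  have key: "f (u * x + v * y) \<ge> f x powr u * f y powr v" if "x \<in> ?P" "y \<in> ?P" "u \<ge> 0" "v \<ge> 0" "u + v = 1" for x y u v
  proof -
    have "v = 1 - u" using that by simp
    moreover have "u \<in> {0..1}" using that by auto
    moreover have "x \<ge> 0" "y \<ge> 0" using that by auto
    ultimately show ?thesis using lc unfolding log_concave_on_nonneg_def by blast
  qed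
  have cvx: "convex ?P"
    unfolding convex_def
  proof (intro ballI allI impI)
    fix x y u v assume h: "x \<in> ?P" "y \<in> ?P" "(0::real) \<le> u" "0 \<le> v" "u + v = 1"
    have "f x powr u * f y powr v > 0" using h by simp
    with key[OF h] have "f (u * x + v * y) > 0" by linarith
    moreover have "u * x + v * y \<ge> 0" using h by simp
    ultimately show "u *\<^sub>R x + v *\<^sub>R y \<in> ?P" by simp
  qed
  show ?thesis
    unfolding convex_on_def
  proof (intro conjI cvx ballI allI impI)
    fix x y u v assume h: "x \<in> ?P" "y \<in> ?P" "(0::real) \<le> u" "0 \<le> v" "u + v = 1"
    have pos: "f x powr u * f y powr v > 0" using h by simp
    have "ln (f x powr u * f y powr v) \<le> ln (f (u * x + v * y))"
      using key[OF h] pos by (subst ln_le_cancel_iff) auto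
    moreover have "ln (f x powr u * f y powr v) = u * ln (f x) + v * ln (f y)"
      using h by (simp add: ln_mult ln_powr)
    ultimately show "- ln (f (u *\<^sub>R x + v *\<^sub>R y)) \<le> u * - ln (f x) + v * - ln (f y)"
      by simp
  qed
qed

lemma lc_tangent_ln:
  assumes lc: "log_concave_on_nonneg f" and diff: "\<forall>t>0. f differentiable (at t)"
    and s: "s > 0" "f s > 0" and t: "t \<ge> 0" "f t > 0"
  shows "ln (f t) \<le> ln (f s) + deriv f s / f s * (t - s)"
proof -
  let ?P = "{t. 0 \<le> t \<and> 0 < f t}"
  have cont: "continuous_on {0<..} f"
    using diff by (intro continuous_at_imp_continuous_on) (auto intro: differentiable_imp_continuous_within)
  have "open (f -` {0<..} \<inter> {0<..})"
    using cont by (subst (asm) continuous_on_open_vimage) auto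
  moreover have "f -` {0<..} \<inter> {0<..} \<subseteq> ?P" by auto
  moreover have "s \<in> f -` {0<..} \<inter> {0<..}" using s by auto
  ultimately have sint: "s \<in> interior ?P" by (meson interior_maximal interior_open subsetD)
  have d: "(f has_real_derivative deriv f s) (at s)"
    using diff s by (simp add: DERIV_deriv_iff_real_differentiable)
  have "((\<lambda>t. - ln (f t)) has_real_derivative (- (deriv f s / f s))) (at s)"
    using d s by (auto intro!: derivative_eq_intros simp: field_simps)
  hence d2: "((\<lambda>t. - ln (f t)) has_real_derivative (- (deriv f s / f s))) (at s within ?P)"
    by (rule has_field_derivative_at_within)
  have "(- ln (f t)) - (- ln (f s)) \<ge> (- (deriv f s / f s)) * (t - s)"
    by (rule convex_on_imp_above_tangent[OF lc_convex[OF lc] convex_connected sint _ d2])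
       (use t lc_convex[OF lc] in \<open>auto simp: convex_on_def\<close>)
  thus ?thesis by simp
qed
lemma f_tangent:
  assumes lc: "log_concave_on_nonneg f" and diff: "\<forall>t>0. f differentiable (at t)"
    and s: "s > 0" "f s > 0" and t: "t \<ge> 0" "f t \<ge> 0"
  shows "f t \<le> f s * exp (deriv f s / f s * (t - s))"
proof (cases "f t = 0")
  case True then show ?thesis using s by simp
next
  case False
  hence ft: "f t > 0" using t by simp
  have "f t = exp (ln (f t))" using ft by simp
  also have "\<dots> \<le> exp (ln (f s) + deriv f s / f s * (t - s))"
    using lc_tangent_ln[OF lc diff s t(1) ft] by simp
  also have "\<dots> = f s * exp (deriv f s / f s * (t - s))" using s by (simp add: exp_add)
  finally show ?thesis .
qed

lemma pow_tangent:
  fixes s t :: real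
  assumes "s > 0" "t \<ge> 0"
  shows "t ^ m \<le> s ^ m * exp (real m / s * (t - s))"
proof -
  have "t / s \<le> exp (t / s - 1)" using exp_ge_add_one_self[of "t / s - 1"] by simp
  hence "(t / s) ^ m \<le> exp (t / s - 1) ^ m"
    using assms by (intro power_mono) auto
  also have "\<dots> = exp (real m * (t / s - 1))" by (simp add: exp_of_nat_mult)
  also have "real m * (t / s - 1) = real m / s * (t - s)" using assms by (simp add: field_simps)
  finally have "(t / s) ^ m \<le> exp (real m / s * (t - s))" .
  hence "s ^ m * (t / s) ^ m \<le> s ^ m * exp (real m / s * (t - s))"
    using assms by (intro mult_left_mono) auto
  moreover have "s ^ m * (t / s) ^ m = t ^ m" using assms by (simp add: power_divide)
  ultimately show ?thesis by simp
qed

lemma h_tangent: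
  assumes lc: "log_concave_on_nonneg f" and diff: "\<forall>t>0. f differentiable (at t)"
    and s: "s > 0" "f s > 0" and t: "t \<ge> 0" "f t \<ge> 0"
  shows "t ^ m * f t \<le> s ^ m * f s * exp ((real m / s + deriv f s / f s) * (t - s))"
proof -
  have "t ^ m * f t \<le> (s ^ m * exp (real m / s * (t - s))) * (f s * exp (deriv f s / f s * (t - s)))"
    using pow_tangent[OF s(1) t(1), of m] f_tangent[OF lc diff s t] t s
    by (intro mult_mono) auto
  also have "\<dots> = s ^ m * f s * exp ((real m / s + deriv f s / f s) * (t - s))"
    by (simp add: distrib_right exp_add)
  finally show ?thesis .
qed

lemma d_mono:
  assumes lc: "log_concave_on_nonneg f" and diff: "\<forall>t>0. f differentiable (at t)"
    and "0 < s1" "s1 \<le> s2" "f s1 > 0" "f s2 > 0"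
  shows "deriv f s2 / f s2 \<le> deriv f s1 / f s1"
proof -
  define D1 where "D1 = deriv f s1 / f s1"
  define D2 where "D2 = deriv f s2 / f s2"
  have 1: "ln (f s2) \<le> ln (f s1) + D1 * (s2 - s1)"
    unfolding D1_def using assms by (intro lc_tangent_ln) auto
  have 2: "ln (f s1) \<le> ln (f s2) + D2 * (s1 - s2)"
    unfolding D2_def using assms by (intro lc_tangent_ln) auto
  have "0 \<le> D1 * (s2 - s1) + D2 * (s1 - s2)" using 1 2 by linarith
  also have "D1 * (s2 - s1) + D2 * (s1 - s2) = (D1 - D2) * (s2 - s1)" by algebra
  finally have "0 \<le> (D1 - D2) * (s2 - s1)" .
  show ?thesis
  proof (cases "s1 = s2")
    case True then show ?thesis by simp
  next
    case False
    hence "s2 - s1 > 0" using assms by simp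
    with \<open>0 \<le> (D1 - D2) * (s2 - s1)\<close> have "D2 \<le> D1" by (simp add: zero_le_mult_iff)
    thus ?thesis unfolding D1_def D2_def .
  qed
qed

lemma set_integral_subset_le:
  fixes f :: "real \<Rightarrow> real"
  assumes "A \<in> sets M" "A \<subseteq> B" "set_integrable M B f" "\<And>x. x \<in> B \<Longrightarrow> 0 \<le> f x"
  shows "(LINT x:A|M. f x) \<le> (LINT x:B|M. f x)"
proof -
  have iA: "set_integrable M A f" using set_integrable_subset[OF assms(3) assms(1) assms(2)] .
  show ?thesis
    using iA assms(3) unfolding set_integrable_def set_lebesgue_integral_def
    by (intro integral_mono) (use assms in \<open>auto split: split_indicator\<close>)
qed

lemma set_integral_nonneg':
  fixes f :: "real \<Rightarrow> real"
  assumes "\<And>x. x \<in> A \<Longrightarrow> 0 \<le> f x"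
  shows "0 \<le> (LINT x:A|M. f x)"
  unfolding set_lebesgue_integral_def
  by (rule integral_nonneg_AE) (use assms in \<open>auto split: split_indicator\<close>)
lemma tp_exists:
  fixes f :: "real \<Rightarrow> real" and n :: nat
  assumes n: "n \<ge> 2" and cont: "continuous_on {0..} f" and nn: "\<forall>t\<ge>0. f t \<ge> 0"
    and lc: "log_concave_on_nonneg f" and diff: "\<forall>t>0. f differentiable (at t)"
    and int: "set_integrable lborel {0..} f" and pos: "0 < (LINT t:{0..}|lborel. f t)"
  shows "\<exists>t0>0. f t0 > 0 \<and> deriv f t0 / f t0 = - (real n - 1) / t0"
proof -
  define m where "m = n - 1"
  have m1: "m \<ge> 1" and rm: "real m = real n - 1" using n by (auto simp: m_def of_nat_diff)
  define h where "h t = t ^ m * f t" for t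
  obtain a where a: "a > 0" "f a > 0"
  proof (rule ccontr)
    assume "\<not> thesis"
    hence z: "\<forall>t>0. f t = 0" using that nn by (metis less_eq_real_def not_le)
    have "AE x in lborel. indicator {0..} x *\<^sub>R f x = 0"
      using AE_lborel_singleton[of 0] by eventually_elim (auto simp: z split: split_indicator)
    hence "(LINT t:{0..}|lborel. f t) = 0" unfolding set_lebesgue_integral_def by (rule integral_eq_zero_AE)
    with pos show False by simp
  qed
  have ha: "h a > 0" using a by (simp add: h_def)
  obtain b where b: "b > a" "f b \<le> f a / 2"
  proof (rule ccontr)
    assume "\<not> thesis"
    hence big: "\<forall>t>a. f t > f a / 2" using that by (metis not_le)
    define K where "K = 2 * (LINT t:{0..}|lborel. f t) / f a + 1"
    have K: "K > 0" unfolding K_def by (intro add_pos_pos divide_pos_pos) (use pos a in auto)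
    have "(LINT t:{a..a+K}|lborel. f t) \<le> (LINT t:{0..}|lborel. f t)"
      using a nn by (intro set_integral_subset_le[OF _ _ int]) auto
    moreover have "(LINT t:{a..a+K}|lborel. f t) = integral {a..a+K} f"
      by (rule set_borel_integral_eq_integral(2)[OF borel_integrable_atLeastAtMost'])
         (rule continuous_on_subset[OF cont], use a in auto)
    moreover have "integral {a..a+K} f \<ge> integral {a..a+K} (\<lambda>_. f a / 2)"
    proof (rule integral_le)
      show "f integrable_on {a..a+K}"
        by (rule integrable_continuous_interval, rule continuous_on_subset[OF cont]) (use a in auto)
      show "(\<lambda>_. f a / 2) integrable_on {a..a+K}" by (rule integrable_const_ivl)
      fix t assume "t \<in> {a..a+K}"
      hence "t = a \<or> t > a" by auto
      then show "f a / 2 \<le> f t"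
      proof
        assume "t > a" thus ?thesis using big by (meson less_imp_le)
      qed (use a in auto)
    qed
    moreover have "integral {a..a+K} (\<lambda>_. f a / 2) = K * (f a / 2)" using K by simp
    ultimately have "K * (f a / 2) \<le> (LINT t:{0..}|lborel. f t)" by linarith
    moreover have "K * (f a / 2) = (LINT t:{0..}|lborel. f t) + f a / 2"
      using a by (simp add: K_def field_simps)
    ultimately show False using a by simp
  qed
  have "\<exists>R\<ge>a. \<forall>t\<ge>R. h t < h a"
  proof (cases "f b > 0")
    case True
    define D where "D = deriv f b / f b"
    define \<delta> where "\<delta> = - D"
    have 1: "ln (f a) \<le> ln (f b) + D * (a - b)"
      unfolding D_def using a b True by (intro lc_tangent_ln[OF lc diff]) auto
    have 11: "D * (a - b) = \<delta> * (b - a)" unfolding \<delta>_def by algebra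
    have "ln (f b) \<le> ln (f a / 2)" using b True by simp
    also have "ln (f a / 2) = ln (f a) - ln 2" using a by (simp add: ln_div)
    finally have "\<delta> * (b - a) \<ge> ln 2" using 1 11 by linarith
    hence dpos: "\<delta> > 0" using b by (smt (verit) ln_gt_zero mult_nonpos_nonneg)
    have bound: "h t \<le> f b * exp (\<delta> * b) / \<delta> ^ m * ((\<delta> * t) ^ m / exp (\<delta> * t))" if "t \<ge> 0" for t
    proof -
      have "f t \<le> f b * exp (D * (t - b))"
        unfolding D_def using that nn True b a by (intro f_tangent[OF lc diff]) auto
      also have "D * (t - b) = \<delta> * b - \<delta> * t" unfolding \<delta>_def by algebra
      also have "exp (\<delta> * b - \<delta> * t) = exp (\<delta> * b) / exp (\<delta> * t)"
        by (rule exp_diff)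
      finally have "t ^ m * f t \<le> t ^ m * (f b * (exp (\<delta> * b) / exp (\<delta> * t)))"
        using that by (intro mult_left_mono) auto
      also have "\<dots> = f b * exp (\<delta> * b) / \<delta> ^ m * ((\<delta> * t) ^ m / exp (\<delta> * t))"
        using dpos by (simp add: power_mult_distrib field_simps)
      finally show ?thesis unfolding h_def .
    qed
    have "filterlim (\<lambda>t. \<delta> * t) at_top at_top"
      using dpos by (intro filterlim_tendsto_pos_mult_at_top[OF tendsto_const] filterlim_ident) auto
    from filterlim_compose[OF tendsto_power_div_exp_0 this]
    have "((\<lambda>t. (\<delta> * t) ^ m / exp (\<delta> * t)) \<longlongrightarrow> 0) at_top" .
    hence "((\<lambda>t. f b * exp (\<delta> * b) / \<delta> ^ m * ((\<delta> * t) ^ m / exp (\<delta> * t))) \<longlongrightarrow> 0) at_top"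
      by (rule tendsto_mult_right_zero)
    hence "eventually (\<lambda>t. f b * exp (\<delta> * b) / \<delta> ^ m * ((\<delta> * t) ^ m / exp (\<delta> * t)) < h a) at_top"
      using ha by (rule order_tendstoD)
    then obtain R where R: "\<And>t. t \<ge> R \<Longrightarrow> f b * exp (\<delta> * b) / \<delta> ^ m * ((\<delta> * t) ^ m / exp (\<delta> * t)) < h a"
      by (auto simp: eventually_at_top_linorder)
    show ?thesis
    proof (intro exI[of _ "max R a"] conjI allI impI)
      fix t assume "max R a \<le> t"
      hence "t \<ge> R" "t \<ge> 0" using a by auto
      thus "h t < h a" using bound R by (meson le_less_trans)
    qed auto
  next
    case False
    have "f b \<ge> 0" using nn a b by simp
    hence fb: "f b = 0" using False by linarith
    have "f t = 0" if "t \<ge> b" for t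
    proof (rule ccontr)
      assume "f t \<noteq> 0"
      moreover have "f t \<ge> 0" using nn that a b by simp
      ultimately have "f t > 0" by linarith
      hence "f b > 0" using a b that by (intro lc_pos_between[OF lc, of a b t]) auto
      thus False using fb by simp
    qed
    thus ?thesis using ha b by (intro exI[of _ b]) (auto simp: h_def)
  qed
  then obtain R where R: "R \<ge> a" "\<forall>t\<ge>R. h t < h a" by blast
  have hc: "continuous_on {0..R} h"
    unfolding h_def by (intro continuous_intros continuous_on_subset[OF cont]) auto
  obtain t0 where t0: "t0 \<in> {0..R}" "\<forall>y\<in>{0..R}. h y \<le> h t0"
    using continuous_attains_sup[OF compact_Icc _ hc] a R by auto
  have hat0: "h a \<le> h t0" using t0 a R by auto
  have hmax: "h y \<le> h t0" if "y \<ge> 0" for y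
  proof (cases "y \<le> R")
    case True thus ?thesis using t0 that by auto
  next
    case False
    hence "h y < h a" using R by auto
    thus ?thesis using hat0 by linarith
  qed
  have t0pos: "t0 > 0"
  proof (rule ccontr)
    assume "\<not> t0 > 0"
    hence "t0 = 0" using t0 by auto
    hence "h t0 = 0" using m1 by (simp add: h_def)
    thus False using hat0 ha by simp
  qed
  have ft0: "f t0 > 0"
  proof -
    have "t0 ^ m * f t0 > 0" using hat0 ha by (simp add: h_def)
    moreover have "t0 ^ m > 0" using t0pos by simp
    ultimately show ?thesis using t0pos by (simp add: zero_less_mult_iff)
  qed
  have df: "(f has_real_derivative deriv f t0) (at t0)"
    using diff t0pos by (simp add: DERIV_deriv_iff_real_differentiable)
  obtain k where k: "m = Suc k" using m1 by (cases m) auto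
  have D: "(h has_real_derivative (real m * t0 ^ k * f t0 + deriv f t0 * t0 ^ m)) (at t0)"
    unfolding h_def using DERIV_mult[OF DERIV_pow df, of m] k by simp
  have "real m * t0 ^ k * f t0 + deriv f t0 * t0 ^ m = 0"
  proof (rule DERIV_local_max[OF D t0pos], intro allI impI)
    fix y assume "\<bar>t0 - y\<bar> < t0"
    hence "y \<ge> 0" by (simp add: abs_less_iff)
    thus "h y \<le> h t0" by (rule hmax)
  qed
  moreover have "t0 ^ m = t0 ^ k * t0" using k by simp
  ultimately have "t0 ^ k * (real m * f t0 + t0 * deriv f t0) = 0"
    by (simp only: distrib_left mult.assoc mult.commute mult.left_commute)
  hence "real m * f t0 + t0 * deriv f t0 = 0" using t0pos by simp
  hence "deriv f t0 / f t0 = - real m / t0" using t0pos ft0 by (simp add: field_simps)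
  thus ?thesis using t0pos ft0 rm by auto
qed
lemma tp_char:
  fixes f :: "real \<Rightarrow> real" and n :: nat
  assumes n: "n \<ge> 2" and cont: "continuous_on {0..} f" and nn: "\<forall>t\<ge>0. f t \<ge> 0"
    and lc: "log_concave_on_nonneg f" and diff: "\<forall>t>0. f differentiable (at t)"
    and int: "set_integrable lborel {0..} f" and pos: "0 < (LINT t:{0..}|lborel. f t)"
  shows "tp (real n) f > 0 \<and> f (tp (real n) f) > 0 \<and>
         deriv f (tp (real n) f) / f (tp (real n) f) = - (real n - 1) / tp (real n) f"
proof -
  let ?P = "\<lambda>t. t > 0 \<and> f t > 0 \<and> deriv f t / f t = - (real n - 1) / t"
  have ex: "\<exists>t. ?P t" using tp_exists[OF assms] by blast
  have le: "t2 \<le> t1" if "?P t1" "?P t2" for t1 t2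
  proof (rule ccontr)
    assume "\<not> t2 \<le> t1"
    hence "deriv f t2 / f t2 \<le> deriv f t1 / f t1"
      using that by (intro d_mono[OF lc diff]) auto
    hence "- (real n - 1) / t2 \<le> - (real n - 1) / t1" using that by simp
    hence a: "(real n - 1) / t1 \<le> (real n - 1) / t2" by (smt (verit) minus_divide_left)
    have "real n - 1 > 0" using n by simp
    hence "t2 \<le> t1" using that a by (smt (verit) divide_strict_left_mono mult_pos_pos)
    with \<open>\<not> t2 \<le> t1\<close> show False by simp
  qed
  have "\<exists>!t. ?P t" using ex le by (meson order_antisym)
  hence "?P (THE t. ?P t)" by (rule theI')
  thus ?thesis unfolding tp_def .
qed
lemma main_est:
  fixes f :: "real \<Rightarrow> real" and m :: nat and t0 \<epsilon> :: real
  assumes m1: "m \<ge> 1" and cont: "continuous_on {0..} f" and nn: "\<forall>t\<ge>0. f t \<ge> 0"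
    and lc: "log_concave_on_nonneg f" and diff: "\<forall>t>0. f differentiable (at t)"
    and t0: "t0 > 0" "f t0 > 0" "deriv f t0 / f t0 = - real m / t0"
    and e: "0 < \<epsilon>" "\<epsilon> \<le> 1" and x10: "real m * \<epsilon>\<^sup>2 \<ge> 10"
    and hint: "set_integrable lborel {0..} (\<lambda>t. t ^ m * f t)"
  shows "(LINT t:{t0 * (1 - \<epsilon>) .. t0 * (1 + \<epsilon>)}|lborel. t ^ m * f t)
         \<ge> (1 - exp (- (real m * \<epsilon>\<^sup>2) / 6)) * (LINT t:{0..}|lborel. t ^ m * f t)"
proof -
  define h where "h t = t ^ m * f t" for t
  define x where "x = real m * \<epsilon>\<^sup>2"
  define t1 where "t1 = t0 * (1 + \<epsilon>)"
  define th where "th = t0 * (1 + \<epsilon> / 2)"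
  define tl where "tl = t0 * (1 - \<epsilon> / 2)"
  define t2 where "t2 = t0 * (1 - \<epsilon>)"
  define In where "In = (LINT t:{t2..t1}|lborel. h t)"
  define Tot where "Tot = (LINT t:{0..}|lborel. h t)"
  define w where "w = t0 * \<epsilon> / 2"
  have hh: "h = (\<lambda>t. t ^ m * f t)" by (simp add: h_def fun_eq_iff)
  have mpos: "real m > 0" using m1 by simp
  have xpos: "x \<ge> 10" using x10 by (simp add: x_def)
  have ord: "0 \<le> t2" "t2 < tl" "tl < t0" "t0 < th" "th < t1"
    using t0 e by (auto simp: t1_def th_def tl_def t2_def)
  have wpos: "w > 0" using t0 e by (simp add: w_def)
  have hnn: "h t \<ge> 0" if "t \<ge> 0" for t using nn that by (simp add: h_def)
  have hcont: "continuous_on {0..} h"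
    unfolding h_def by (intro continuous_intros cont)
  have hint': "set_integrable lborel {0..} h" using hint by (simp add: hh)
  have hcI: "h integrable_on {a..b}" if "0 \<le> a" for a b
    by (rule integrable_continuous_interval, rule continuous_on_subset[OF hcont]) (use that in auto)
  have hsub: "set_integrable lborel A h" if "A \<in> sets lborel" "A \<subseteq> {0..}" for A
    using set_integrable_subset[OF hint' that] .
  have split: "Tot = (LINT t:{0..<t2}|lborel. h t) + In + (LINT t:{t1<..}|lborel. h t)"
  proof -
    have U: "{0..} = {0..<t2} \<union> ({t2..t1} \<union> {t1<..})" using ord by auto
    have a: "(LINT t:{t2..t1} \<union> {t1<..}|lborel. h t) = In + (LINT t:{t1<..}|lborel. h t)"
      unfolding In_def by (rule set_integral_Un) (use ord in \<open>auto intro!: hsub\<close>)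
    have "Tot = (LINT t:{0..<t2}|lborel. h t) + (LINT t:{t2..t1} \<union> {t1<..}|lborel. h t)"
      unfolding Tot_def by (subst U, rule set_integral_Un) (use ord in \<open>auto intro!: hsub\<close>)
    with a show ?thesis by simp
  qed
  have Lo1: "(LINT t:{0..<t2}|lborel. h t) \<le> integral {0..t2} h"
  proof -
    have "(LINT t:{0..<t2}|lborel. h t) \<le> (LINT t:{0..t2}|lborel. h t)"
      by (rule set_integral_subset_le) (auto intro!: hsub hnn)
    also have "\<dots> = integral {0..t2} h"
      by (rule set_borel_integral_eq_integral(2)) (auto intro!: hsub)
    finally show ?thesis .
  qed
  have Up1: "(LINT t:{t1<..}|lborel. h t) \<le> integral {t1..} h"
  proof -
    have "(LINT t:{t1<..}|lborel. h t) \<le> (LINT t:{t1..}|lborel. h t)"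
      by (rule set_integral_subset_le) (use ord in \<open>auto intro!: hsub hnn\<close>)
    also have "\<dots> = integral {t1..} h"
      by (rule set_borel_integral_eq_integral(2)) (use ord in \<open>auto intro!: hsub\<close>)
    finally show ?thesis .
  qed
  have hI1: "h integrable_on {t1..}"
    by (rule set_borel_integral_eq_integral(1)) (use ord in \<open>auto intro!: hsub\<close>)
  have In1: "In = integral {t2..t1} h"
    unfolding In_def by (rule set_borel_integral_eq_integral(2)) (use ord in \<open>auto intro!: hsub\<close>)
  have ptup: "h th \<le> h t" if "t \<in> {t0..th}" for t
  proof (cases "f th > 0")
    case False
    hence "h th = 0" using nn ord t0 by (simp add: h_def) (smt (verit))
    thus ?thesis using hnn that t0 by simp
  next
    case True
    have ft: "f t > 0" using that ord True t0 by (intro lc_pos_between[OF lc, of t0 t th]) auto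
    have tpos: "t > 0" using that t0 by simp
    have "h th \<le> t ^ m * f t * exp ((real m / t + deriv f t / f t) * (th - t))"
      unfolding h_def using ord nn tpos ft by (intro h_tangent[OF lc diff]) auto
    also have "(real m / t + deriv f t / f t) * (th - t) \<le> 0"
    proof -
      have "deriv f t / f t \<le> deriv f t0 / f t0"
        using that ft t0 by (intro d_mono[OF lc diff]) auto
      moreover have "real m / t \<le> real m / t0" using that t0 by (simp add: frac_le)
      ultimately have "real m / t + deriv f t / f t \<le> 0" using t0 by simp
      moreover have "th - t \<ge> 0" using that by simp
      ultimately show ?thesis by (simp add: mult_nonpos_nonneg)
    qed
    hence "exp ((real m / t + deriv f t / f t) * (th - t)) \<le> 1" by simp
    hence "t ^ m * f t * exp ((real m / t + deriv f t / f t) * (th - t)) \<le> t ^ m * f t"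
      using hnn[of t] tpos by (simp add: h_def mult_left_le)
    finally show ?thesis by (simp add: h_def)
  qed
  have ptlo: "h tl \<le> h t" if "t \<in> {tl..t0}" for t
  proof (cases "f tl > 0")
    case False
    hence "h tl = 0" using nn ord t0 by (simp add: h_def) (smt (verit))
    thus ?thesis using hnn that ord by simp
  next
    case True
    have ft: "f t > 0" using that ord True t0 by (intro lc_pos_between[OF lc, of tl t t0]) auto
    have tpos: "t > 0" using that ord by simp
    have "h tl \<le> t ^ m * f t * exp ((real m / t + deriv f t / f t) * (tl - t))"
      unfolding h_def using ord nn tpos ft by (intro h_tangent[OF lc diff]) auto
    also have "(real m / t + deriv f t / f t) * (tl - t) \<le> 0"
    proof -
      have "deriv f t0 / f t0 \<le> deriv f t / f t"
        using that ft t0 tpos by (intro d_mono[OF lc diff]) auto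
      moreover have "real m / t0 \<le> real m / t" using that tpos by (simp add: frac_le)
      ultimately have "real m / t + deriv f t / f t \<ge> 0" using t0 by simp
      moreover have "tl - t \<le> 0" using that by simp
      ultimately show ?thesis by (simp add: mult_nonneg_nonpos)
    qed
    hence "exp ((real m / t + deriv f t / f t) * (tl - t)) \<le> 1" by simp
    hence "t ^ m * f t * exp ((real m / t + deriv f t / f t) * (tl - t)) \<le> t ^ m * f t"
      using hnn[of t] tpos by (simp add: h_def mult_left_le)
    finally show ?thesis by (simp add: h_def)
  qed
  have midup: "w * h th \<le> In"
  proof -
    have "w * h th = integral {t0..th} (\<lambda>_. h th)"
      using ord by (simp add: w_def th_def algebra_simps)
    also have "\<dots> \<le> integral {t0..th} h"
      by (rule integral_le) (use ptup t0 in \<open>auto intro!: hcI\<close>)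
    also have "\<dots> \<le> integral {t2..t1} h"
      by (rule integral_subset_le) (use ord t0 in \<open>auto intro!: hcI hnn\<close>)
    finally show ?thesis using In1 by simp
  qed
  have midlo: "w * h tl \<le> In"
  proof -
    have "w * h tl = integral {tl..t0} (\<lambda>_. h tl)"
      using ord by (simp add: w_def tl_def algebra_simps)
    also have "\<dots> \<le> integral {tl..t0} h"
      by (rule integral_le) (use ptlo ord in \<open>auto intro!: hcI\<close>)
    also have "\<dots> \<le> integral {t2..t1} h"
      by (rule integral_subset_le) (use ord t0 in \<open>auto intro!: hcI hnn\<close>)
    finally show ?thesis using In1 by simp
  qed
  have up: "integral {t1..} h \<le> w * h th * (6 / x) * exp (- x / 6)"
  proof (cases "f th > 0")
    case False
    have "f t = 0" if "t \<ge> th" for t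
    proof (rule ccontr)
      assume "f t \<noteq> 0"
      hence "f t > 0" using nn that ord t0 by (smt (verit))
      hence "f th > 0" using that ord t0 by (intro lc_pos_between[OF lc, of t0 th t]) auto
      thus False using False by simp
    qed
    hence "integral {t1..} h = integral {t1..} (\<lambda>_. 0::real)"
      using ord by (intro integral_cong) (auto simp: h_def)
    hence "integral {t1..} h = 0" by simp
    moreover have "h th \<ge> 0" using hnn ord t0 by simp
    ultimately show ?thesis using wpos xpos by simp
  next
    case True
    define \<alpha> where "\<alpha> = real m * \<epsilon> / (3 * t0)"
    have apos: "\<alpha> > 0" using mpos e t0 by (simp add: \<alpha>_def)
    have thpos: "th > 0" using ord t0 by simp
    have D: "deriv f th / f th \<le> - real m / t0"
      using d_mono[OF lc diff, of t0 th] ord t0 True by simp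
    have "real m / th - real m / t0 = real m * (t0 - th) / (th * t0)"
      using t0 thpos by (simp add: field_simps)
    also have "t0 - th = - (t0 * \<epsilon> / 2)" by (simp add: th_def algebra_simps)
    also have "real m * - (t0 * \<epsilon> / 2) / (th * t0) = - (real m * \<epsilon> / (2 * th))"
      using t0 thpos by (simp add: field_simps)
    finally have eq1: "real m / th - real m / t0 = - (real m * \<epsilon> / (2 * th))" .
    have "2 * th \<le> 3 * t0" using e t0 by (simp add: th_def)
    hence "real m * \<epsilon> / (3 * t0) \<le> real m * \<epsilon> / (2 * th)"
      using mpos e thpos by (intro divide_left_mono) auto
    hence sig: "real m / th + deriv f th / f th \<le> - \<alpha>" using D eq1 unfolding \<alpha>_def by linarith
    define c where "c = h th * exp (\<alpha> * th)"
    have pt: "h t \<le> c * exp (- \<alpha> * t)" if "t \<in> {t1..}" for t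
    proof -
      have tge: "t \<ge> th" "t \<ge> 0" using that ord t0 by auto
      have "h t \<le> th ^ m * f th * exp ((real m / th + deriv f th / f th) * (t - th))"
        unfolding h_def using tge nn thpos True by (intro h_tangent[OF lc diff]) auto
      also have "\<dots> \<le> th ^ m * f th * exp (- \<alpha> * (t - th))"
      proof -
        have "(real m / th + deriv f th / f th) * (t - th) \<le> - \<alpha> * (t - th)"
          using mult_right_mono[OF sig, of "t - th"] tge by simp
        thus ?thesis using thpos True by (intro mult_left_mono) auto
      qed
      also have "\<dots> = c * exp (- \<alpha> * t)"
      proof -
        have "exp (- \<alpha> * (t - th)) = exp (\<alpha> * th) * exp (- \<alpha> * t)"
          by (simp add: exp_add[symmetric] algebra_simps)
        thus ?thesis by (simp add: c_def h_def)
      qed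
      finally show ?thesis .
    qed
    have HI: "((\<lambda>t. c * exp (- \<alpha> * t)) has_integral c * (exp (- \<alpha> * t1) / \<alpha>)) {t1..}"
      by (rule has_integral_mult_right, rule has_integral_exp_minus_to_infinity[OF apos])
    have "integral {t1..} h \<le> integral {t1..} (\<lambda>t. c * exp (- \<alpha> * t))"
      by (rule integral_le[OF hI1]) (use HI pt in \<open>auto simp: integrable_on_def\<close>)
    also have "\<dots> = c * (exp (- \<alpha> * t1) / \<alpha>)" using HI by (rule integral_unique)
    also have "\<dots> = h th * exp (\<alpha> * th + - \<alpha> * t1) * (1 / \<alpha>)"
      unfolding exp_add[of "\<alpha> * th" "- \<alpha> * t1"] by (simp add: c_def)
    also have "\<alpha> * th + - \<alpha> * t1 = - x / 6"
      unfolding \<alpha>_def x_def th_def t1_def using t0 by (simp add: field_simps power2_eq_square)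
    also have "1 / \<alpha> = w * (6 / x)"
      unfolding \<alpha>_def x_def w_def using t0 e mpos by (simp add: field_simps power2_eq_square)
    finally show ?thesis by (simp add: algebra_simps)
  qed
  have lo: "integral {0..t2} h \<le> w * h tl * (4 / x) * exp (- x / 4)"
  proof (cases "f tl > 0")
    case False
    have "f t = 0" if "0 \<le> t" "t \<le> tl" for t
    proof (rule ccontr)
      assume "f t \<noteq> 0"
      hence "f t > 0" using nn that by (smt (verit))
      hence "f tl > 0" using that ord t0 by (intro lc_pos_between[OF lc, of t tl t0]) auto
      thus False using False by simp
    qed
    hence "integral {0..t2} h = integral {0..t2} (\<lambda>_. 0::real)"
      using ord by (intro integral_cong) (auto simp: h_def)
    hence "integral {0..t2} h = 0" by simp
    moreover have "h tl \<ge> 0" using hnn ord by simp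
    ultimately show ?thesis using wpos xpos by simp
  next
    case True
    define \<beta> where "\<beta> = real m * \<epsilon> / (2 * t0)"
    have bpos: "\<beta> > 0" using mpos e t0 by (simp add: \<beta>_def)
    have tlpos: "tl > 0" using ord by simp
    have D: "- real m / t0 \<le> deriv f tl / f tl"
      using d_mono[OF lc diff, of tl t0] ord t0 True by simp
    have eq1: "real m / tl - real m / t0 = real m * \<epsilon> / (2 * tl)"
      using t0 tlpos by (simp add: tl_def field_simps)
    have "2 * tl \<le> 2 * t0" using ord by simp
    hence "real m * \<epsilon> / (2 * t0) \<le> real m * \<epsilon> / (2 * tl)"
      using mpos e tlpos by (intro divide_left_mono) auto
    hence sig: "real m / tl + deriv f tl / f tl \<ge> \<beta>" using D eq1 unfolding \<beta>_def by linarith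
    define F where "F t = h tl * exp (\<beta> * (t - tl)) / \<beta>" for t
    have pt: "h t \<le> h tl * exp (\<beta> * (t - tl))" if "t \<in> {0..t2}" for t
    proof -
      have tle: "t \<le> tl" "t \<ge> 0" using that ord by auto
      have "h t \<le> tl ^ m * f tl * exp ((real m / tl + deriv f tl / f tl) * (t - tl))"
        unfolding h_def using tle nn tlpos True by (intro h_tangent[OF lc diff]) auto
      also have "\<dots> \<le> tl ^ m * f tl * exp (\<beta> * (t - tl))"
      proof -
        have "(real m / tl + deriv f tl / f tl) * (t - tl) \<le> \<beta> * (t - tl)"
          using mult_right_mono_neg[OF sig, of "t - tl"] tle by simp
        thus ?thesis using tlpos True by (intro mult_left_mono) auto
      qed
      finally show ?thesis by (simp add: h_def)
    qed
    have HI: "((\<lambda>t. h tl * exp (\<beta> * (t - tl))) has_integral F t2 - F 0) {0..t2}"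
    proof (rule fundamental_theorem_of_calculus)
      show "0 \<le> t2" using ord by simp
      fix t assume "t \<in> {0..t2}"
      have "(F has_real_derivative h tl * exp (\<beta> * (t - tl))) (at t)"
        unfolding F_def using bpos by (auto intro!: derivative_eq_intros)
      thus "(F has_vector_derivative h tl * exp (\<beta> * (t - tl))) (at t within {0..t2})"
        by (simp add: has_real_derivative_iff_has_vector_derivative[symmetric] has_field_derivative_at_within)
    qed
    have "integral {0..t2} h \<le> integral {0..t2} (\<lambda>t. h tl * exp (\<beta> * (t - tl)))"
      by (rule integral_le) (use HI pt ord in \<open>auto simp: integrable_on_def intro!: hcI\<close>)
    also have "\<dots> = F t2 - F 0" using HI by (rule integral_unique)
    also have "\<dots> \<le> F t2"
    proof -
      have "F 0 \<ge> 0" unfolding F_def using hnn[of tl] ord bpos by simp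
      thus ?thesis by simp
    qed
    also have "F t2 = h tl * exp (\<beta> * (t2 - tl)) * (1 / \<beta>)" by (simp add: F_def)
    also have "\<beta> * (t2 - tl) = - x / 4"
      unfolding \<beta>_def x_def tl_def t2_def using t0 by (simp add: field_simps power2_eq_square)
    also have "1 / \<beta> = w * (4 / x)"
      unfolding \<beta>_def x_def w_def using t0 e mpos by (simp add: field_simps power2_eq_square)
    finally show ?thesis by (simp add: algebra_simps)
  qed
  define y where "y = exp (- x / 6)"
  have y: "0 < y" "y \<le> 1" using xpos by (auto simp: y_def)
  have e4: "exp (- x / 4) \<le> y" unfolding y_def using xpos by simp
  have In0: "In \<ge> 0" using midup wpos hnn ord by (smt (verit) mult_nonneg_nonneg)
  have x0: "4 / x \<ge> 0" "6 / x \<ge> 0" using xpos by auto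
  have A: "w * h tl * (4 / x) * exp (- x / 4) \<le> In * (4 / x) * y"
  proof -
    have "(w * h tl) * ((4 / x) * exp (- x / 4)) \<le> In * ((4 / x) * y)"
      using midlo e4 x0 In0 by (intro mult_mono mult_left_mono) auto
    thus ?thesis by (simp add: mult.assoc)
  qed
  have B: "w * h th * (6 / x) * exp (- x / 6) \<le> In * (6 / x) * y"
  proof -
    have "(w * h th) * ((6 / x) * y) \<le> In * ((6 / x) * y)"
      using midup x0 y by (intro mult_right_mono) auto
    thus ?thesis by (simp add: mult.assoc y_def)
  qed
  have "In * (4 / x) * y + In * (6 / x) * y = In * y * (10 / x)" by (simp add: field_simps)
  also have "\<dots> \<le> In * y * 1" using In0 y xpos by (intro mult_left_mono) auto
  finally have C: "In * (4 / x) * y + In * (6 / x) * y \<le> In * y" by simp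
  have "Tot \<le> In * (1 + y)"
  proof -
    have "In * (1 + y) = In + In * y" by algebra
    thus ?thesis using split Lo1 Up1 lo up A B C by linarith
  qed
  moreover have "Tot \<ge> 0" unfolding Tot_def by (rule set_integral_nonneg') (simp add: hnn)
  ultimately have "(1 - y) * Tot \<le> In"
  proof -
    assume T: "Tot \<le> In * (1 + y)" "Tot \<ge> 0"
    have "(1 - y) * Tot \<le> (1 - y) * (In * (1 + y))" using T y by (intro mult_left_mono) auto
    also have "\<dots> = In - In * y\<^sup>2" by (simp add: algebra_simps power2_eq_square)
    also have "\<dots> \<le> In" using In0 by simp
    finally show ?thesis .
  qed
  thus ?thesis unfolding In_def Tot_def y_def x_def t1_def t2_def hh .
qed
theorem lemma4p5:
  shows "\<exists>C::real. \<exists>c::real. C > 1 \<and> 0 < c \<and> c < 1 \<and>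
    (\<forall>(n::nat) (f::real \<Rightarrow> real) (\<epsilon>::real).
       n \<ge> 2 \<longrightarrow>
       continuous_on {0..} f \<longrightarrow>
       (\<forall>t\<ge>0. f t \<ge> 0) \<longrightarrow>
       log_concave_on_nonneg f \<longrightarrow>
       C2_on_pos f \<longrightarrow>
       set_integrable lborel {0..} f \<longrightarrow>
       0 < (LINT t:{0..}|lborel. f t) \<longrightarrow>
       0 \<le> \<epsilon> \<longrightarrow> \<epsilon> \<le> 1 \<longrightarrow>
       (LINT t:{tp (real n) f * (1 - \<epsilon>) .. tp (real n) f * (1 + \<epsilon>)}|lborel. t ^ (n - 1) * f t)
         \<ge> (1 - C * exp (- c * \<epsilon>\<^sup>2 * real n)) * (LINT t:{0..}|lborel. t ^ (n - 1) * f t))"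
proof (rule exI[of _ 3], rule exI[of _ "1/24"], intro conjI allI impI)
  fix n :: nat and f :: "real \<Rightarrow> real" and \<epsilon> :: real
  assume n: "n \<ge> 2" and cont: "continuous_on {0..} f" and nn: "\<forall>t\<ge>0. f t \<ge> 0"
    and lc: "log_concave_on_nonneg f" and c2: "C2_on_pos f"
    and int: "set_integrable lborel {0..} f" and pos: "0 < (LINT t:{0..}|lborel. f t)"
    and e0: "0 \<le> \<epsilon>" and e1: "\<epsilon> \<le> 1"
  have diff: "\<forall>t>0. f differentiable (at t)" using c2 unfolding C2_on_pos_def by blast
  define t0 where "t0 = tp (real n) f"
  have t0: "t0 > 0" "f t0 > 0" "deriv f t0 / f t0 = - (real n - 1) / t0"
    using tp_char[OF n cont nn lc diff int pos] unfolding t0_def by auto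
  define m where "m = n - 1"
  have m1: "m \<ge> 1" and rm: "real m = real n - 1" and nm: "real n \<le> 2 * real m"
    using n by (auto simp: m_def of_nat_diff)
  define LHS where "LHS = (LINT t:{t0 * (1 - \<epsilon>) .. t0 * (1 + \<epsilon>)}|lborel. t ^ m * f t)"
  define Tot where "Tot = (LINT t:{0..}|lborel. t ^ m * f t)"
  have Tot0: "Tot \<ge> 0" unfolding Tot_def by (rule set_integral_nonneg') (simp add: nn)
  have LHS0: "LHS \<ge> 0" unfolding LHS_def
  proof (rule set_integral_nonneg')
    fix t assume "t \<in> {t0 * (1 - \<epsilon>) .. t0 * (1 + \<epsilon>)}"
    moreover have "t0 * (1 - \<epsilon>) \<ge> 0" using t0 e1 by simp
    ultimately have "t \<ge> 0" by auto
    thus "0 \<le> t ^ m * f t" using nn by simp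
  qed
  have "(1 - 3 * exp (- (1/24) * \<epsilon>\<^sup>2 * real n)) * Tot \<le> LHS"
  proof (cases "real m * \<epsilon>\<^sup>2 \<ge> 10")
    case False
    have "(1/24) * \<epsilon>\<^sup>2 * real n \<le> (1/24) * \<epsilon>\<^sup>2 * (2 * real m)"
      using nm by (intro mult_left_mono) auto
    also have "\<dots> \<le> 1" using False by simp
    finally have "- 1 \<le> - (1/24) * \<epsilon>\<^sup>2 * real n" by linarith
    hence E: "exp (- 1) \<le> exp (- (1/24) * \<epsilon>\<^sup>2 * real n)" by (rule exp_mono)
    moreover have "1 \<le> 3 * exp (- 1::real)" using exp_le by (simp add: exp_minus field_simps)
    ultimately have "1 - 3 * exp (- (1/24) * \<epsilon>\<^sup>2 * real n) \<le> 0" by linarith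
    hence "(1 - 3 * exp (- (1/24) * \<epsilon>\<^sup>2 * real n)) * Tot \<le> 0"
      using Tot0 by (simp add: mult_nonpos_nonneg)
    thus ?thesis using LHS0 by linarith
  next
    case True
    hence epos: "\<epsilon> > 0" using e0 by (cases "\<epsilon> = 0") auto
    show ?thesis
    proof (cases "set_integrable lborel {0..} (\<lambda>t. t ^ m * f t)")
      case False
      hence "Tot = 0" unfolding Tot_def set_lebesgue_integral_def set_integrable_def
        by (simp add: not_integrable_integral_eq)
      thus ?thesis using LHS0 by simp
    next
      case True2: True
      have M: "(1 - exp (- (real m * \<epsilon>\<^sup>2) / 6)) * Tot \<le> LHS"
        unfolding LHS_def Tot_def
        by (rule main_est[OF m1 cont nn lc diff t0(1,2) _ epos e1 True True2]) (use t0(3) rm in simp)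
      have "(1/24) * \<epsilon>\<^sup>2 * real n \<le> (1/24) * \<epsilon>\<^sup>2 * (2 * real m)"
        using nm by (intro mult_left_mono) auto
      also have "\<dots> \<le> real m * \<epsilon>\<^sup>2 / 6" using m1 by (simp add: field_simps)
      finally have "exp (- (real m * \<epsilon>\<^sup>2) / 6) \<le> exp (- (1/24) * \<epsilon>\<^sup>2 * real n)" by simp
      hence "1 - 3 * exp (- (1/24) * \<epsilon>\<^sup>2 * real n) \<le> 1 - exp (- (real m * \<epsilon>\<^sup>2) / 6)"
        by (smt (verit) exp_gt_zero)
      hence "(1 - 3 * exp (- (1/24) * \<epsilon>\<^sup>2 * real n)) * Tot \<le> (1 - exp (- (real m * \<epsilon>\<^sup>2) / 6)) * Tot"
        using Tot0 by (rule mult_right_mono)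
      thus ?thesis using M by linarith
    qed
  qed
  thus "(1 - 3 * exp (- (1/24) * \<epsilon>\<^sup>2 * real n)) * (LINT t:{0..}|lborel. t ^ (n - 1) * f t)
      \<le> (LINT t:{tp (real n) f * (1 - \<epsilon>) .. tp (real n) f * (1 + \<epsilon>)}|lborel. t ^ (n - 1) * f t)"
    by (simp only: LHS_def Tot_def t0_def m_def)
qed (auto)
end
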